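(* Let $\mathcal{X}$ be a connected $n$-premaniplex with base flag $x_0$, let $(\mathcal{Y},\eta)$ be an $(n,m)$-voltage operator with $\mathcal{Y}$ connected and base flag $y_0$, let $N=\operatorname{Stab}_{\mathcal{C}^n}(x_0)$, $L=\operatorname{Stab}_{\mathcal{C}^m}(y_0)$, and $\zeta:L\to\mathcal{C}^n$, $\zeta(\omega)=\eta(W_\omega(y_0))$. If $\mathcal{X}\rtimes_\eta\mathcal{Y}$ is connected and every automorphism of $\mathcal{X}\rtimes_\eta\mathcal{Y}$ is induced by an automorphism of $\mathcal{X}$, then $\operatorname{N}_{\mathcal{C}^m}(\zeta^{-1}(N))\subseteq L$. Conversely, if $(\mathcal{Y},\eta)$ preserves connectivity and $\operatorname{N}_{\mathcal{C}^m}(\zeta^{-1}(N))\subseteq L$, then every automorphism of $\mathcal{X}\rtimes_\eta\mathcal{Y}$ is induced by an automorphism of $\mathcal{X}$.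
   Context: An $n$-premaniplex is an edge-coloured graph (semi-edges and parallel edges allowed) with colours $\{0,\dots,n-1\}$ such that every vertex (flag) is the start of exactly one dart of each colour, and for $|i-j|\ge2$ alternating $i,j$-paths of length 4 are closed; $x^i$ is the $i$-adjacent flag of $x$. $\mathcal{C}^n=\langle r_0,\dots,r_{n-1}\mid r_i^2,\ (r_ir_j)^2\ (|i-j|\ge2)\rangle$ acts on the left on flags by $r_ix=x^i$; automorphisms act on the right. For a flag $y$ of an $m$-premaniplex $\mathcal{Y}$ and $\omega\in\mathcal{C}^m$, $W_\omega(y)$ is the homotopy class of paths from $y$ whose colour sequence $i_1,\dots,i_k$ satisfies $r_{i_k}\cdots r_{i_1}=\omega$; these form the fundamental groupoid $\Pi(\mathcal{Y})$. A voltage assignment $\eta:\Pi(\mathcal{Y})\to\mathcal{C}^n$ satisfies $\eta(W_1W_2)=\eta(W_2)\eta(W_1)$; $(\mathcal{Y},\eta)$ is an $(n,m)$-voltage operator. $\mathcal{X}\rtimes_\eta\mathcal{Y}$ has flags $\mathcal{X}\times\mathcal{Y}$ and $(x,y)^i=(\eta(W_{r_i}(y))x,r_iy)$, $i\in\{0,\dots,m-1\}$. An automorphism $\gamma$ of $\mathcal{X}\rtimes_\eta\mathcal{Y}$ is induced by an automorphism of $\mathcal{X}$ if there is $\alpha\in\operatorname{Aut}(\mathcal{X})$ with $(x,y)\gamma=(x\alpha,y)$ for all $(x,y)$. The operator preserves connectivity if $\mathcal{X}\rtimes_\eta\mathcal{Y}$ is connected whenever $\mathcal{X}$ is. Standing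 convention: $\mathcal{Y}$ has a spanning tree all of whose darts have trivial voltage. *)

theory Defs
  imports "HOL-Algebra.Group_Action"
begin

text \<open>A word [a_1,...,a_k] (letters < n) stands for the product r_{a_1} r_{a_2} ... r_{a_k}.
  cox_eq n is the congruence on words generated by the defining relations.\<close>

inductive_set cox_eq :: "nat \<Rightarrow> (nat list \<times> nat list) set" for n :: nat where
  cox_refl: "w \<in> lists {..<n} \<Longrightarrow> (w, w) \<in> cox_eq n"
| cox_sym: "(u, v) \<in> cox_eq n \<Longrightarrow> (v, u) \<in> cox_eq n"
| cox_trans: "(u, v) \<in> cox_eq n \<Longrightarrow> (v, w) \<in> cox_eq n \<Longrightarrow> (u, w) \<in> cox_eq n"
| cox_inv: "u \<in> lists {..<n} \<Longrightarrow> v \<in> lists {..<n} \<Longrightarrow> i < n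
            \<Longrightarrow> (u @ [i, i] @ v, u @ v) \<in> cox_eq n"
| cox_comm: "u \<in> lists {..<n} \<Longrightarrow> v \<in> lists {..<n} \<Longrightarrow> i < n \<Longrightarrow> j < n
            \<Longrightarrow> (i + 2 \<le> j \<or> j + 2 \<le> i)
            \<Longrightarrow> (u @ [i, j, i, j] @ v, u @ v) \<in> cox_eq n"

definition Cox :: "nat \<Rightarrow> nat list set monoid" where
  "Cox n = \<lparr> carrier = lists {..<n} // cox_eq n,
             mult = (\<lambda>A B. cox_eq n `` {(SOME a. a \<in> A) @ (SOME b. b \<in> B)}),
             one = cox_eq n `` {[]} \<rparr>"

definition cox_gen :: "nat \<Rightarrow> nat \<Rightarrow> nat list set" where
  "cox_gen n i = cox_eq n `` {[i]}"

text \<open>An n-premaniplex is given by its set of flags F and the adjacency maps adj i (x |-> x^i),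
  i < n; the dart of colour i starting at x ends at adj i x (a semi-edge iff adj i x = x).\<close>
definition premaniplex :: "nat \<Rightarrow> 'a set \<Rightarrow> (nat \<Rightarrow> 'a \<Rightarrow> 'a) \<Rightarrow> bool" where
  "premaniplex n F adj \<longleftrightarrow>
     (\<forall>i<n. \<forall>x\<in>F. adj i x \<in> F \<and> adj i (adj i x) = x) \<and>
     (\<forall>i<n. \<forall>j<n. (i + 2 \<le> j \<or> j + 2 \<le> i) \<longrightarrow>
        (\<forall>x\<in>F. adj i (adj j (adj i (adj j x))) = x))"

definition word_act :: "(nat \<Rightarrow> 'a \<Rightarrow> 'a) \<Rightarrow> nat list \<Rightarrow> 'a \<Rightarrow> 'a" where
  "word_act adj w x = foldr adj w x"

definition cox_act :: "(nat \<Rightarrow> 'a \<Rightarrow> 'a) \<Rightarrow> nat list set \<Rightarrow> 'a \<Rightarrow> 'a" where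
  "cox_act adj A x = word_act adj (SOME w. w \<in> A) x"

definition connected_pm :: "nat \<Rightarrow> 'a set \<Rightarrow> (nat \<Rightarrow> 'a \<Rightarrow> 'a) \<Rightarrow> bool" where
  "connected_pm n F adj \<longleftrightarrow> (\<forall>x\<in>F. \<forall>y\<in>F. \<exists>w\<in>lists {..<n}. y = word_act adj w x)"

definition pm_aut :: "nat \<Rightarrow> 'a set \<Rightarrow> (nat \<Rightarrow> 'a \<Rightarrow> 'a) \<Rightarrow> ('a \<Rightarrow> 'a) \<Rightarrow> bool" where
  "pm_aut n F adj \<gamma> \<longleftrightarrow> bij_betw \<gamma> F F \<and> (\<forall>x\<in>F. \<forall>i<n. \<gamma> (adj i x) = adj i (\<gamma> x))"

text \<open>The homotopy class W_omega(y) of an m-premaniplex is identified with the pair (y, omega),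
  y a flag, omega \<in> C^m; a voltage assignment is thus a function eta y omega with values in C^n.
  Concatenation: W_omega(y) W_psi(omega y) = W_{psi omega}(y).\<close>
definition voltage_assignment ::
  "nat \<Rightarrow> nat \<Rightarrow> 'b set \<Rightarrow> (nat \<Rightarrow> 'b \<Rightarrow> 'b) \<Rightarrow> ('b \<Rightarrow> nat list set \<Rightarrow> nat list set) \<Rightarrow> bool" where
  "voltage_assignment n m FY adjY eta \<longleftrightarrow>
     (\<forall>y\<in>FY. \<forall>\<omega>\<in>carrier (Cox m). eta y \<omega> \<in> carrier (Cox n)) \<and>
     (\<forall>y\<in>FY. \<forall>\<omega>\<in>carrier (Cox m). \<forall>\<psi>\<in>carrier (Cox m).
        eta y (\<psi> \<otimes>\<^bsub>Cox m\<^esub> \<omega>) = eta (cox_act adjY \<omega> y) \<psi> \<otimes>\<^bsub>Cox n\<^esub> eta y \<omega>)"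

definition voltage_operator ::
  "nat \<Rightarrow> nat \<Rightarrow> 'b set \<Rightarrow> (nat \<Rightarrow> 'b \<Rightarrow> 'b) \<Rightarrow> ('b \<Rightarrow> nat list set \<Rightarrow> nat list set) \<Rightarrow> bool" where
  "voltage_operator n m FY adjY eta \<longleftrightarrow>
     premaniplex m FY adjY \<and> voltage_assignment n m FY adjY eta"

fun tree_walk :: "('b \<times> nat) set \<Rightarrow> (nat \<Rightarrow> 'b \<Rightarrow> 'b) \<Rightarrow> 'b \<Rightarrow> nat list \<Rightarrow> bool" where
  "tree_walk T adj y [] = True"
| "tree_walk T adj y (i # ws) = ((y, i) \<in> T \<and> tree_walk T adj (adj i y) ws)"

definition walk_end :: "(nat \<Rightarrow> 'b \<Rightarrow> 'b) \<Rightarrow> 'b \<Rightarrow> nat list \<Rightarrow> 'b" where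
  "walk_end adj y ws = fold adj ws y"

text \<open>No backtracking (at a flag, darts of distinct colours are distinct).\<close>
definition reduced_walk :: "nat list \<Rightarrow> bool" where
  "reduced_walk ws \<longleftrightarrow> (\<forall>k. Suc k < length ws \<longrightarrow> ws ! k \<noteq> ws ! Suc k)"

definition spanning_tree :: "nat \<Rightarrow> 'b set \<Rightarrow> (nat \<Rightarrow> 'b \<Rightarrow> 'b) \<Rightarrow> ('b \<times> nat) set \<Rightarrow> bool" where
  "spanning_tree m F adj T \<longleftrightarrow>
     T \<subseteq> {(y, i). y \<in> F \<and> i < m \<and> adj i y \<noteq> y} \<and>
     (\<forall>(y, i)\<in>T. (adj i y, i) \<in> T) \<and>
     (\<forall>y\<in>F. \<forall>z\<in>F. \<exists>ws. tree_walk T adj y ws \<and> walk_end adj y ws = z) \<and>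
     (\<forall>y\<in>F. \<forall>ws. tree_walk T adj y ws \<and> reduced_walk ws \<and> walk_end adj y ws = y \<longrightarrow> ws = [])"

text \<open>Standing convention: Y has a spanning tree all of whose darts have trivial voltage.\<close>
definition trivial_tree_convention ::
  "nat \<Rightarrow> nat \<Rightarrow> 'b set \<Rightarrow> (nat \<Rightarrow> 'b \<Rightarrow> 'b) \<Rightarrow> ('b \<Rightarrow> nat list set \<Rightarrow> nat list set) \<Rightarrow> bool" where
  "trivial_tree_convention n m FY adjY eta \<longleftrightarrow>
     (\<exists>T. spanning_tree m FY adjY T \<and> (\<forall>(y, i)\<in>T. eta y (cox_gen m i) = \<one>\<^bsub>Cox n\<^esub>))"

definition vprod_flags :: "'a set \<Rightarrow> 'b set \<Rightarrow> ('a \<times> 'b) set" where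
  "vprod_flags FX FY = FX \<times> FY"

definition vprod_adj ::
  "nat \<Rightarrow> (nat \<Rightarrow> 'a \<Rightarrow> 'a) \<Rightarrow> ('b \<Rightarrow> nat list set \<Rightarrow> nat list set) \<Rightarrow> (nat \<Rightarrow> 'b \<Rightarrow> 'b)
     \<Rightarrow> nat \<Rightarrow> 'a \<times> 'b \<Rightarrow> 'a \<times> 'b" where
  "vprod_adj m adjX eta adjY i xy =
     (cox_act adjX (eta (snd xy) (cox_gen m i)) (fst xy), adjY i (snd xy))"

definition induced_by_X ::
  "nat \<Rightarrow> 'a set \<Rightarrow> (nat \<Rightarrow> 'a \<Rightarrow> 'a) \<Rightarrow> 'b set \<Rightarrow> ('a \<times> 'b \<Rightarrow> 'a \<times> 'b) \<Rightarrow> bool" where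
  "induced_by_X n FX adjX FY \<gamma> \<longleftrightarrow>
     (\<exists>\<alpha>. pm_aut n FX adjX \<alpha> \<and> (\<forall>x\<in>FX. \<forall>y\<in>FY. \<gamma> (x, y) = (\<alpha> x, y)))"

text \<open>Connected premaniplexes are countable, so (up to isomorphism) it suffices to let X range over
  premaniplexes whose flags are natural numbers.\<close>
definition preserves_connectivity ::
  "nat \<Rightarrow> nat \<Rightarrow> 'b set \<Rightarrow> (nat \<Rightarrow> 'b \<Rightarrow> 'b) \<Rightarrow> ('b \<Rightarrow> nat list set \<Rightarrow> nat list set) \<Rightarrow> bool" where
  "preserves_connectivity n m FY adjY eta \<longleftrightarrow>
     (\<forall>(FX :: nat set) adjX. premaniplex n FX adjX \<and> connected_pm n FX adjX \<longrightarrow>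
        connected_pm m (vprod_flags FX FY) (vprod_adj m adjX eta adjY))"

end

theory Submission
  imports Defs "HOL-Library.Countable_Set"
begin

lemma cox_eq_lists: "(u, v) \<in> cox_eq n \<Longrightarrow> u \<in> lists {..<n} \<and> v \<in> lists {..<n}"
  by (induction rule: cox_eq.induct) auto

lemma cox_eq_app_left: "(u, v) \<in> cox_eq n \<Longrightarrow> w \<in> lists {..<n} \<Longrightarrow> (w @ u, w @ v) \<in> cox_eq n"
proof (induction rule: cox_eq.induct)
  case (cox_refl w') then show ?case by (intro cox_eq.cox_refl) auto
next
  case (cox_sym u v) then show ?case by (auto intro: cox_eq.cox_sym)
next
  case (cox_trans u v w') then show ?case by (auto intro: cox_eq.cox_trans)
next
  case (cox_inv u v i) then show ?case using cox_eq.cox_inv[of "w @ u" n v i] by auto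
next
  case (cox_comm u v i j) then show ?case using cox_eq.cox_comm[of "w @ u" n v i j] by auto
qed

lemma cox_eq_app_right: "(u, v) \<in> cox_eq n \<Longrightarrow> w \<in> lists {..<n} \<Longrightarrow> (u @ w, v @ w) \<in> cox_eq n"
proof (induction rule: cox_eq.induct)
  case (cox_refl w') then show ?case by (intro cox_eq.cox_refl) auto
next
  case (cox_sym u v) then show ?case by (auto intro: cox_eq.cox_sym)
next
  case (cox_trans u v w') then show ?case by (auto intro: cox_eq.cox_trans)
next
  case (cox_inv u v i) then show ?case using cox_eq.cox_inv[of u n "v @ w" i] by auto
next
  case (cox_comm u v i j) then show ?case using cox_eq.cox_comm[of u n "v @ w" i j] by auto
qed

lemma cox_eq_app: "(u, u') \<in> cox_eq n \<Longrightarrow> (v, v') \<in> cox_eq n \<Longrightarrow> (u @ v, u' @ v') \<in> cox_eq n"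
  by (meson cox_eq.cox_trans cox_eq_app_left cox_eq_app_right cox_eq_lists)

lemma cox_equiv: "equiv (lists {..<n}) (cox_eq n)"
proof (rule equivI)
  show "cox_eq n \<subseteq> lists {..<n} \<times> lists {..<n}" using cox_eq_lists by fast
  show "refl_on (lists {..<n}) (cox_eq n)"
    by (rule refl_onI) (rule cox_eq.cox_refl)
  show "sym (cox_eq n)" by (rule symI) (rule cox_eq.cox_sym)
  show "trans (cox_eq n)" by (rule transI) (rule cox_eq.cox_trans)
qed

definition cls :: "nat \<Rightarrow> nat list \<Rightarrow> nat list set" where
  "cls n w = cox_eq n `` {w}"

lemma cls_eq_iff: "u \<in> lists {..<n} \<Longrightarrow> v \<in> lists {..<n} \<Longrightarrow> cls n u = cls n v \<longleftrightarrow> (u, v) \<in> cox_eq n"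
  unfolding cls_def using eq_equiv_class_iff[OF cox_equiv] by blast

lemma cls_mem: "(u, v) \<in> cox_eq n \<Longrightarrow> v \<in> cls n u" unfolding cls_def by auto

lemma mem_cls: "v \<in> cls n u \<longleftrightarrow> (u, v) \<in> cox_eq n" unfolding cls_def by auto

lemma carrier_Cox: "carrier (Cox n) = cls n ` lists {..<n}"
  unfolding Cox_def cls_def quotient_def by auto

lemma cls_in_carrier: "w \<in> lists {..<n} \<Longrightarrow> cls n w \<in> carrier (Cox n)"
  by (simp add: carrier_Cox)

lemma carrier_CoxE: assumes "A \<in> carrier (Cox n)" obtains w where "w \<in> lists {..<n}" "A = cls n w"
  using assms by (auto simp: carrier_Cox)

lemma some_rep: assumes "w \<in> lists {..<n}" shows "(w, SOME a. a \<in> cls n w) \<in> cox_eq n"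
proof -
  have "w \<in> cls n w" using assms by (simp add: cls_mem cox_eq.cox_refl)
  then have "(SOME a. a \<in> cls n w) \<in> cls n w" by (rule someI)
  then show ?thesis by (simp add: mem_cls)
qed

lemma mult_cls: assumes "u \<in> lists {..<n}" "v \<in> lists {..<n}"
  shows "cls n u \<otimes>\<^bsub>Cox n\<^esub> cls n v = cls n (u @ v)"
proof -
  have "((SOME a. a \<in> cls n u) @ (SOME a. a \<in> cls n v), u @ v) \<in> cox_eq n"
    using cox_eq_app[OF cox_eq.cox_sym[OF some_rep[OF assms(1)]] cox_eq.cox_sym[OF some_rep[OF assms(2)]]] .
  then have "cls n ((SOME a. a \<in> cls n u) @ (SOME a. a \<in> cls n v)) = cls n (u @ v)"
    using cls_eq_iff cox_eq_lists by blast
  then show ?thesis by (simp add: Cox_def cls_def)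
qed

lemma one_Cox: "\<one>\<^bsub>Cox n\<^esub> = cls n []" by (simp add: Cox_def cls_def)

lemma rev_cancel: "w \<in> lists {..<n} \<Longrightarrow> (rev w @ w, []) \<in> cox_eq n"
proof (induction w)
  case Nil then show ?case by (simp add: cox_eq.cox_refl)
next
  case (Cons a w)
  have "(rev w @ [a, a] @ w, rev w @ w) \<in> cox_eq n"
    using Cons by (intro cox_eq.cox_inv) auto
  then show ?case using Cons by (auto intro: cox_eq.cox_trans)
qed

lemma Cox_group: "group (Cox n)"
proof (rule groupI)
  fix x y assume "x \<in> carrier (Cox n)" "y \<in> carrier (Cox n)"
  then obtain u v where "u \<in> lists {..<n}" "v \<in> lists {..<n}" "x = cls n u" "y = cls n v"
    by (metis carrier_CoxE)
  then show "x \<otimes>\<^bsub>Cox n\<^esub> y \<in> carrier (Cox n)"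
    by (simp add: mult_cls cls_in_carrier)
next
  show "\<one>\<^bsub>Cox n\<^esub> \<in> carrier (Cox n)" by (simp add: one_Cox cls_in_carrier)
next
  fix x y z assume "x \<in> carrier (Cox n)" "y \<in> carrier (Cox n)" "z \<in> carrier (Cox n)"
  then obtain u v w where "u \<in> lists {..<n}" "v \<in> lists {..<n}" "w \<in> lists {..<n}"
     "x = cls n u" "y = cls n v" "z = cls n w"
    by (metis carrier_CoxE)
  then show "x \<otimes>\<^bsub>Cox n\<^esub> y \<otimes>\<^bsub>Cox n\<^esub> z = x \<otimes>\<^bsub>Cox n\<^esub> (y \<otimes>\<^bsub>Cox n\<^esub> z)"
    by (simp add: mult_cls)
next
  fix x assume "x \<in> carrier (Cox n)"
  then obtain u where "u \<in> lists {..<n}" "x = cls n u" by (metis carrier_CoxE)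
  then show "\<one>\<^bsub>Cox n\<^esub> \<otimes>\<^bsub>Cox n\<^esub> x = x"
    by (simp add: mult_cls one_Cox)
next
  fix x assume "x \<in> carrier (Cox n)"
  then obtain w where w: "w \<in> lists {..<n}" "x = cls n w" by (rule carrier_CoxE)
  then have "cls n (rev w) \<otimes>\<^bsub>Cox n\<^esub> x = \<one>\<^bsub>Cox n\<^esub>"
  proof -
    have r: "rev w \<in> lists {..<n}" using w(1) by auto
    show ?thesis using rev_cancel[OF w(1)] w mult_cls[OF r w(1)] cls_eq_iff[of "rev w @ w" n "[]"] r
      by (simp add: one_Cox)
  qed
  then show "\<exists>y\<in>carrier (Cox n). y \<otimes>\<^bsub>Cox n\<^esub> x = \<one>\<^bsub>Cox n\<^esub>"
  proof -
    have "cls n (rev w) \<in> carrier (Cox n)" using w(1) by (intro cls_in_carrier) auto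
    then show ?thesis using \<open>cls n (rev w) \<otimes>\<^bsub>Cox n\<^esub> x = \<one>\<^bsub>Cox n\<^esub>\<close> by blast
  qed
qed

lemma gen_cls: "cox_gen n i = cls n [i]" by (simp add: cox_gen_def cls_def)

lemma word_act_Nil[simp]: "word_act adj [] x = x" by (simp add: word_act_def)
lemma word_act_Cons[simp]: "word_act adj (i # w) x = adj i (word_act adj w x)" by (simp add: word_act_def)
lemma word_act_append: "word_act adj (u @ v) x = word_act adj u (word_act adj v x)" by (simp add: word_act_def)

lemma word_act_closed: "premaniplex m F adj \<Longrightarrow> w \<in> lists {..<m} \<Longrightarrow> x \<in> F \<Longrightarrow> word_act adj w x \<in> F"
  by (induction w) (auto simp: premaniplex_def)

lemma word_act_cong: assumes P: "premaniplex m F adj" shows "(u, v) \<in> cox_eq m \<Longrightarrow> x \<in> F \<Longrightarrow> word_act adj u x = word_act adj v x"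
proof (induction arbitrary: x rule: cox_eq.induct)
  case (cox_inv u v i)
  have "word_act adj v x \<in> F" using word_act_closed[OF P cox_inv(2,4)] .
  then show ?case using cox_inv P by (simp add: word_act_append premaniplex_def)
next
  case (cox_comm u v i j)
  have z: "word_act adj v x \<in> F" using word_act_closed[OF P cox_comm(2,6)] .
  have "adj i (adj j (adj i (adj j (word_act adj v x)))) = word_act adj v x"
    using P z cox_comm(3,4,5) unfolding premaniplex_def by blast
  then show ?case by (simp add: word_act_append)
qed auto

lemma cox_act_cls: assumes P: "premaniplex m F adj" and w: "w \<in> lists {..<m}" and x: "x \<in> F"
  shows "cox_act adj (cls m w) x = word_act adj w x"
  unfolding cox_act_def using word_act_cong[OF P some_rep[OF w] x] by simp

lemma cox_act_closed: "premaniplex m F adj \<Longrightarrow> A \<in> carrier (Cox m) \<Longrightarrow> x \<in> F \<Longrightarrow> cox_act adj A x \<in> F"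
proof -
  assume P: "premaniplex m F adj" and A: "A \<in> carrier (Cox m)" and x: "x \<in> F"
  obtain w where w: "w \<in> lists {..<m}" "A = cls m w" using A by (rule carrier_CoxE)
  show ?thesis using w x cox_act_cls[OF P w(1) x] word_act_closed[OF P w(1) x] by simp
qed

lemma cox_act_mult: assumes P: "premaniplex m F adj" and A: "A \<in> carrier (Cox m)" and B: "B \<in> carrier (Cox m)"
  and x: "x \<in> F"
  shows "cox_act adj (A \<otimes>\<^bsub>Cox m\<^esub> B) x = cox_act adj A (cox_act adj B x)"
proof -
  obtain u v where uv: "u \<in> lists {..<m}" "v \<in> lists {..<m}" "A = cls m u" "B = cls m v"
    using A B by (metis carrier_CoxE)
  have "u @ v \<in> lists {..<m}" using uv by auto
  then show ?thesis using uv x word_act_closed[OF P uv(2) x]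
    by (simp add: mult_cls cox_act_cls[OF P] word_act_append)
qed

lemma cox_act_one: "premaniplex m F adj \<Longrightarrow> x \<in> F \<Longrightarrow> cox_act adj \<one>\<^bsub>Cox m\<^esub> x = x"
  by (simp add: one_Cox cox_act_cls)

lemma cox_act_gen: "premaniplex m F adj \<Longrightarrow> i < m \<Longrightarrow> x \<in> F \<Longrightarrow> cox_act adj (cox_gen m i) x = adj i x"
  by (simp add: gen_cls cox_act_cls)

lemma gen_carrier: "i < m \<Longrightarrow> cox_gen m i \<in> carrier (Cox m)"
  by (simp add: gen_cls cls_in_carrier)

lemma aut_word_act: "pm_aut m F adj g \<Longrightarrow> premaniplex m F adj \<Longrightarrow> w \<in> lists {..<m} \<Longrightarrow> x \<in> F
   \<Longrightarrow> g (word_act adj w x) = word_act adj w (g x)"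
  by (induction w) (auto simp: pm_aut_def word_act_closed)

lemma aut_cox_act: "pm_aut m F adj g \<Longrightarrow> premaniplex m F adj \<Longrightarrow> A \<in> carrier (Cox m) \<Longrightarrow> x \<in> F
   \<Longrightarrow> g (cox_act adj A x) = cox_act adj A (g x)"
proof -
  assume g: "pm_aut m F adj g" and P: "premaniplex m F adj" and A: "A \<in> carrier (Cox m)" and x: "x \<in> F"
  obtain w where w: "w \<in> lists {..<m}" "A = cls m w" using A by (rule carrier_CoxE)
  have gx: "g x \<in> F" using g x unfolding pm_aut_def bij_betw_def by blast
  show ?thesis using w cox_act_cls[OF P w(1) x] cox_act_cls[OF P w(1) gx] aut_word_act[OF g P w(1) x] by simp
qed

lemma connected_cox: "connected_pm m F adj \<Longrightarrow> premaniplex m F adj \<Longrightarrow> x \<in> F \<Longrightarrow> y \<in> F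
  \<Longrightarrow> \<exists>A\<in>carrier (Cox m). y = cox_act adj A x"
proof -
  assume c: "connected_pm m F adj" and P: "premaniplex m F adj" and x: "x \<in> F" and y: "y \<in> F"
  obtain w where w: "w \<in> lists {..<m}" "y = word_act adj w x" using c x y unfolding connected_pm_def by blast
  show ?thesis using w cox_act_cls[OF P w(1) x] cls_in_carrier[OF w(1)] by (intro bexI[of _ "cls m w"]) auto
qed

lemma (in group) normalizer_iff:
  assumes H: "H \<subseteq> carrier G"
  shows "g \<in> normalizer G H \<longleftrightarrow> g \<in> carrier G \<and> (\<forall>k\<in>H. g \<otimes> k \<otimes> inv g \<in> H) \<and> (\<forall>k\<in>H. inv g \<otimes> k \<otimes> g \<in> H)"
proof -
  have eq: "g <# H #> inv g = (\<lambda>k. g \<otimes> k \<otimes> inv g) ` H" if "g \<in> carrier G" for g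
    unfolding l_coset_def r_coset_def by auto
  show ?thesis
  proof
    assume "g \<in> normalizer G H"
    then have g: "g \<in> carrier G" and E: "g <# H #> inv g = H"
      unfolding normalizer_def stabilizer_def using H by auto
    have 1: "\<forall>k\<in>H. g \<otimes> k \<otimes> inv g \<in> H" using E eq[OF g] by auto
    have 2: "inv g \<otimes> k \<otimes> g \<in> H" if k: "k \<in> H" for k
    proof -
      obtain k' where k': "k' \<in> H" "k = g \<otimes> k' \<otimes> inv g" using E eq[OF g] k by auto
      have "inv g \<otimes> k \<otimes> g = k'" using k' g H by (simp add: m_assoc[symmetric] subsetD) 
         (simp add: m_assoc subsetD)
      then show ?thesis using k' by simp
    qed
    show "g \<in> carrier G \<and> (\<forall>k\<in>H. g \<otimes> k \<otimes> inv g \<in> H) \<and> (\<forall>k\<in>H. inv g \<otimes> k \<otimes> g \<in> H)"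
      using g 1 2 by blast
  next
    assume A: "g \<in> carrier G \<and> (\<forall>k\<in>H. g \<otimes> k \<otimes> inv g \<in> H) \<and> (\<forall>k\<in>H. inv g \<otimes> k \<otimes> g \<in> H)"
    then have g: "g \<in> carrier G" by blast
    have "(\<lambda>k. g \<otimes> k \<otimes> inv g) ` H = H"
    proof
      show "(\<lambda>k. g \<otimes> k \<otimes> inv g) ` H \<subseteq> H" using A by auto
      show "H \<subseteq> (\<lambda>k. g \<otimes> k \<otimes> inv g) ` H"
      proof
        fix k assume k: "k \<in> H"
        have "k = g \<otimes> (inv g \<otimes> k \<otimes> g) \<otimes> inv g" using k g H
          by (simp add: m_assoc subsetD) (simp add: m_assoc[symmetric] subsetD)
        then show "k \<in> (\<lambda>k. g \<otimes> k \<otimes> inv g) ` H" using A k by blast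
      qed
    qed
    moreover have "g <# H #> inv g \<subseteq> carrier G" using g H by (auto simp: l_coset_def r_coset_def)
    ultimately show "g \<in> normalizer G H"
      unfolding normalizer_def stabilizer_def using eq[OF g] g H by auto
  qed
qed

lemma stab_sub: "stabilizer (Cox m) (cox_act adj) b \<subseteq> carrier (Cox m)"
  by (auto simp: stabilizer_def)

lemma stab_eq:
  assumes P: "premaniplex m F adj" and b: "b \<in> F"
    and psi: "\<psi> \<in> carrier (Cox m)" and psi': "\<psi>' \<in> carrier (Cox m)"
  shows "cox_act adj \<psi> b = cox_act adj \<psi>' b \<longleftrightarrow>
         inv\<^bsub>Cox m\<^esub> \<psi> \<otimes>\<^bsub>Cox m\<^esub> \<psi>' \<in> stabilizer (Cox m) (cox_act adj) b"
proof -
  interpret G: group "Cox m" by (rule Cox_group)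
  let ?k = "inv\<^bsub>Cox m\<^esub> \<psi> \<otimes>\<^bsub>Cox m\<^esub> \<psi>'"
  have k: "?k \<in> carrier (Cox m)" using psi psi' by simp
  have act_k: "cox_act adj ?k b = cox_act adj (inv\<^bsub>Cox m\<^esub> \<psi>) (cox_act adj \<psi>' b)"
    using cox_act_mult[OF P _ psi' b] psi by simp
  show ?thesis
  proof
    assume e: "cox_act adj \<psi> b = cox_act adj \<psi>' b"
    have "cox_act adj ?k b = cox_act adj (inv\<^bsub>Cox m\<^esub> \<psi>) (cox_act adj \<psi> b)"
      using act_k e by simp
    also have "\<dots> = cox_act adj (inv\<^bsub>Cox m\<^esub> \<psi> \<otimes>\<^bsub>Cox m\<^esub> \<psi>) b"
      using cox_act_mult[OF P G.inv_closed[OF psi] psi b] by simp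
    also have "\<dots> = b" using psi cox_act_one[OF P b] by simp
    finally show "?k \<in> stabilizer (Cox m) (cox_act adj) b" using k by (simp add: stabilizer_def)
  next
    assume "?k \<in> stabilizer (Cox m) (cox_act adj) b"
    then have kb: "cox_act adj ?k b = b" by (simp add: stabilizer_def)
    have "\<psi>' = \<psi> \<otimes>\<^bsub>Cox m\<^esub> ?k" using psi psi' by (simp add: G.m_assoc[symmetric])
    then have "cox_act adj \<psi>' b = cox_act adj \<psi> (cox_act adj ?k b)"
      using cox_act_mult[OF P psi k b] by simp
    then show "cox_act adj \<psi> b = cox_act adj \<psi>' b" using kb by simp
  qed
qed

lemma norm_act_eq:
  assumes P: "premaniplex m F adj" and b: "b \<in> F"
    and g: "g \<in> normalizer (Cox m) (stabilizer (Cox m) (cox_act adj) b)"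
    and psi: "\<psi> \<in> carrier (Cox m)" and psi': "\<psi>' \<in> carrier (Cox m)"
  shows "cox_act adj (\<psi> \<otimes>\<^bsub>Cox m\<^esub> g) b = cox_act adj (\<psi>' \<otimes>\<^bsub>Cox m\<^esub> g) b \<longleftrightarrow>
         cox_act adj \<psi> b = cox_act adj \<psi>' b"
proof -
  interpret G: group "Cox m" by (rule Cox_group)
  let ?K = "stabilizer (Cox m) (cox_act adj) b"
  have gN: "g \<in> carrier (Cox m)" "\<forall>k\<in>?K. g \<otimes>\<^bsub>Cox m\<^esub> k \<otimes>\<^bsub>Cox m\<^esub> inv\<^bsub>Cox m\<^esub> g \<in> ?K"
    "\<forall>k\<in>?K. inv\<^bsub>Cox m\<^esub> g \<otimes>\<^bsub>Cox m\<^esub> k \<otimes>\<^bsub>Cox m\<^esub> g \<in> ?K"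
    using g G.normalizer_iff[OF stab_sub[of m adj b], of g] by blast+
  let ?k = "inv\<^bsub>Cox m\<^esub> \<psi> \<otimes>\<^bsub>Cox m\<^esub> \<psi>'"
  have k: "?k \<in> carrier (Cox m)" using psi psi' by simp
  have e: "inv\<^bsub>Cox m\<^esub> (\<psi> \<otimes>\<^bsub>Cox m\<^esub> g) \<otimes>\<^bsub>Cox m\<^esub> (\<psi>' \<otimes>\<^bsub>Cox m\<^esub> g)
      = inv\<^bsub>Cox m\<^esub> g \<otimes>\<^bsub>Cox m\<^esub> ?k \<otimes>\<^bsub>Cox m\<^esub> g"
    using psi psi' gN(1) by (simp add: G.inv_mult_group G.m_assoc)
  have e2: "g \<otimes>\<^bsub>Cox m\<^esub> (inv\<^bsub>Cox m\<^esub> g \<otimes>\<^bsub>Cox m\<^esub> ?k \<otimes>\<^bsub>Cox m\<^esub> g) \<otimes>\<^bsub>Cox m\<^esub> inv\<^bsub>Cox m\<^esub> g = ?k"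
    using k gN(1) by (simp add: G.m_assoc) (simp add: G.m_assoc[symmetric])
  have "cox_act adj (\<psi> \<otimes>\<^bsub>Cox m\<^esub> g) b = cox_act adj (\<psi>' \<otimes>\<^bsub>Cox m\<^esub> g) b \<longleftrightarrow>
        inv\<^bsub>Cox m\<^esub> g \<otimes>\<^bsub>Cox m\<^esub> ?k \<otimes>\<^bsub>Cox m\<^esub> g \<in> ?K"
    using stab_eq[OF P b, of "\<psi> \<otimes>\<^bsub>Cox m\<^esub> g" "\<psi>' \<otimes>\<^bsub>Cox m\<^esub> g"] psi psi' gN(1) e by simp
  also have "\<dots> \<longleftrightarrow> ?k \<in> ?K"
    using gN e2 by metis
  also have "\<dots> \<longleftrightarrow> cox_act adj \<psi> b = cox_act adj \<psi>' b"
    using stab_eq[OF P b psi psi'] by simp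
  finally show ?thesis .
qed

lemma aut_from_normalizer:
  assumes P: "premaniplex m F adj" and conn: "connected_pm m F adj" and b: "b \<in> F"
    and g: "g \<in> normalizer (Cox m) (stabilizer (Cox m) (cox_act adj) b)"
  shows "\<exists>\<gamma>. pm_aut m F adj \<gamma> \<and> \<gamma> b = cox_act adj g b"
proof -
  interpret G: group "Cox m" by (rule Cox_group)
  have gc: "g \<in> carrier (Cox m)" using g G.normalizer_iff[OF stab_sub[of m adj b], of g] by blast
  define rep where "rep p = (SOME \<psi>. \<psi> \<in> carrier (Cox m) \<and> p = cox_act adj \<psi> b)" for p
  have rep: "rep p \<in> carrier (Cox m) \<and> p = cox_act adj (rep p) b" if "p \<in> F" for p
  proof -
    have "\<exists>\<psi>. \<psi> \<in> carrier (Cox m) \<and> p = cox_act adj \<psi> b" using connected_cox[OF conn P b that] by blast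
    then show ?thesis unfolding rep_def by (rule someI_ex)
  qed
  define \<gamma> where "\<gamma> p = cox_act adj (rep p \<otimes>\<^bsub>Cox m\<^esub> g) b" for p
  have gam: "\<gamma> (cox_act adj \<psi> b) = cox_act adj (\<psi> \<otimes>\<^bsub>Cox m\<^esub> g) b" if "\<psi> \<in> carrier (Cox m)" for \<psi>
  proof -
    have "cox_act adj \<psi> b \<in> F" using cox_act_closed[OF P that b] .
    from rep[OF this] show ?thesis unfolding \<gamma>_def
      using norm_act_eq[OF P b g _ that] by metis
  qed
  have inF: "\<gamma> p \<in> F" if "p \<in> F" for p
    unfolding \<gamma>_def using rep[OF that] gc by (intro cox_act_closed[OF P _ b]) auto
  have "inj_on \<gamma> F"
  proof
    fix p q assume pq: "p \<in> F" "q \<in> F" "\<gamma> p = \<gamma> q"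
    then show "p = q" using rep[OF pq(1)] rep[OF pq(2)] norm_act_eq[OF P b g] unfolding \<gamma>_def by metis
  qed
  moreover have "\<gamma> ` F = F"
  proof
    show "\<gamma> ` F \<subseteq> F" using inF by auto
    show "F \<subseteq> \<gamma> ` F"
    proof
      fix q assume q: "q \<in> F"
      obtain \<chi> where chi: "\<chi> \<in> carrier (Cox m)" "q = cox_act adj \<chi> b" using rep[OF q] by blast
      let ?p = "cox_act adj (\<chi> \<otimes>\<^bsub>Cox m\<^esub> inv\<^bsub>Cox m\<^esub> g) b"
      have "?p \<in> F" using chi gc by (intro cox_act_closed[OF P _ b]) auto
      moreover have "\<gamma> ?p = q" using gam[of "\<chi> \<otimes>\<^bsub>Cox m\<^esub> inv\<^bsub>Cox m\<^esub> g"] chi gc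
        by (simp add: G.m_assoc)
      ultimately show "q \<in> \<gamma> ` F" by blast
    qed
  qed
  moreover have "\<gamma> (adj i p) = adj i (\<gamma> p)" if p: "p \<in> F" and i: "i < m" for p i
  proof -
    obtain \<psi> where psi: "\<psi> \<in> carrier (Cox m)" "p = cox_act adj \<psi> b" using rep[OF p] by blast
    have gi: "cox_gen m i \<in> carrier (Cox m)" using gen_carrier[OF i] .
    have "adj i p = cox_act adj (cox_gen m i \<otimes>\<^bsub>Cox m\<^esub> \<psi>) b"
      using psi cox_act_mult[OF P gi psi(1) b] cox_act_gen[OF P i p] by simp
    then have "\<gamma> (adj i p) = cox_act adj (cox_gen m i \<otimes>\<^bsub>Cox m\<^esub> \<psi> \<otimes>\<^bsub>Cox m\<^esub> g) b"
      using gam gi psi by simp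
    also have "\<dots> = cox_act adj (cox_gen m i) (cox_act adj (\<psi> \<otimes>\<^bsub>Cox m\<^esub> g) b)"
      using gi psi gc by (simp add: G.m_assoc cox_act_mult[OF P _ _ b])
    also have "\<dots> = adj i (\<gamma> p)"
      using gam psi gc cox_act_gen[OF P i] cox_act_closed[OF P _ b] by simp
    finally show ?thesis .
  qed
  ultimately have "pm_aut m F adj \<gamma>" unfolding pm_aut_def bij_betw_def by blast
  moreover have "\<gamma> b = cox_act adj g b"
    using gam[of "\<one>\<^bsub>Cox m\<^esub>"] cox_act_one[OF P b] gc by simp
  ultimately show ?thesis by blast
qed

lemma normalizer_from_aut:
  assumes P: "premaniplex m F adj" and conn: "connected_pm m F adj" and b: "b \<in> F"
    and gam: "pm_aut m F adj \<gamma>"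
  shows "\<exists>g \<in> normalizer (Cox m) (stabilizer (Cox m) (cox_act adj) b). \<gamma> b = cox_act adj g b"
proof -
  interpret G: group "Cox m" by (rule Cox_group)
  let ?K = "stabilizer (Cox m) (cox_act adj) b"
  have gb: "\<gamma> b \<in> F" using gam b by (auto simp: pm_aut_def bij_betw_def)
  obtain g where g: "g \<in> carrier (Cox m)" "\<gamma> b = cox_act adj g b" using connected_cox[OF conn P b gb] by blast
  have ig: "inv\<^bsub>Cox m\<^esub> g \<in> carrier (Cox m)" using g by simp
  have com: "\<gamma> (cox_act adj A x) = cox_act adj A (\<gamma> x)" if "A \<in> carrier (Cox m)" "x \<in> F" for A x
    using aut_cox_act[OF gam P that] .
  have inj: "inj_on \<gamma> F" using gam by (simp add: pm_aut_def bij_betw_def)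
  let ?p = "cox_act adj (inv\<^bsub>Cox m\<^esub> g) b"
  have p: "?p \<in> F" using cox_act_closed[OF P ig b] .
  have gp: "\<gamma> ?p = b" using com[OF ig b] g cox_act_mult[OF P ig g(1) b] cox_act_one[OF P b] by simp
  have 1: "g \<otimes>\<^bsub>Cox m\<^esub> k \<otimes>\<^bsub>Cox m\<^esub> inv\<^bsub>Cox m\<^esub> g \<in> ?K" if k: "k \<in> ?K" for k
  proof -
    have kc: "k \<in> carrier (Cox m)" and kb: "cox_act adj k b = b" using k by (auto simp: stabilizer_def)
    have "\<gamma> (cox_act adj k ?p) = \<gamma> ?p" using com[OF kc p] gp kb by simp
    then have kp: "cox_act adj k ?p = ?p" using inj p cox_act_closed[OF P kc p] by (meson inj_onD)
    have "cox_act adj (g \<otimes>\<^bsub>Cox m\<^esub> k \<otimes>\<^bsub>Cox m\<^esub> inv\<^bsub>Cox m\<^esub> g) b = cox_act adj g (cox_act adj k ?p)"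
      using g kc ig by (simp add: cox_act_mult[OF P _ _ b] cox_act_mult[OF P _ _ p])
    also have "\<dots> = b" using kp cox_act_mult[OF P g(1) ig b] g cox_act_one[OF P b] by simp
    finally show ?thesis using g kc by (simp add: stabilizer_def)
  qed
  have 2: "inv\<^bsub>Cox m\<^esub> g \<otimes>\<^bsub>Cox m\<^esub> k \<otimes>\<^bsub>Cox m\<^esub> g \<in> ?K" if k: "k \<in> ?K" for k
  proof -
    have kc: "k \<in> carrier (Cox m)" and kb: "cox_act adj k b = b" using k by (auto simp: stabilizer_def)
    have "cox_act adj (inv\<^bsub>Cox m\<^esub> g \<otimes>\<^bsub>Cox m\<^esub> k \<otimes>\<^bsub>Cox m\<^esub> g) b
       = cox_act adj (inv\<^bsub>Cox m\<^esub> g) (cox_act adj k (\<gamma> b))"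
    proof -
      have ik: "inv\<^bsub>Cox m\<^esub> g \<otimes>\<^bsub>Cox m\<^esub> k \<in> carrier (Cox m)" using ig kc by simp
      have "cox_act adj (inv\<^bsub>Cox m\<^esub> g \<otimes>\<^bsub>Cox m\<^esub> k \<otimes>\<^bsub>Cox m\<^esub> g) b
         = cox_act adj (inv\<^bsub>Cox m\<^esub> g \<otimes>\<^bsub>Cox m\<^esub> k) (cox_act adj g b)"
        using cox_act_mult[OF P ik g(1) b] .
      also have "\<dots> = cox_act adj (inv\<^bsub>Cox m\<^esub> g) (cox_act adj k (cox_act adj g b))"
        using cox_act_mult[OF P ig kc, of "cox_act adj g b"] gb g(2) by simp
      finally show ?thesis using g(2) by simp
    qed
    also have "\<dots> = cox_act adj (inv\<^bsub>Cox m\<^esub> g) (\<gamma> b)" using com[OF kc b] kb by simp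
    also have "\<dots> = b" using gp com[OF ig b] by simp
    finally show ?thesis using g kc by (simp add: stabilizer_def)
  qed
  have "g \<in> normalizer (Cox m) ?K" using G.normalizer_iff[OF stab_sub[of m adj b], of g] g 1 2 by blast
  then show ?thesis using g by blast
qed

lemma va_closed: "voltage_assignment n m FY adjY eta \<Longrightarrow> y \<in> FY \<Longrightarrow> \<omega> \<in> carrier (Cox m)
  \<Longrightarrow> eta y \<omega> \<in> carrier (Cox n)"
  by (simp add: voltage_assignment_def)

lemma va_mult: "voltage_assignment n m FY adjY eta \<Longrightarrow> y \<in> FY \<Longrightarrow> \<omega> \<in> carrier (Cox m)
  \<Longrightarrow> \<psi> \<in> carrier (Cox m) \<Longrightarrow>
  eta y (\<psi> \<otimes>\<^bsub>Cox m\<^esub> \<omega>) = eta (cox_act adjY \<omega> y) \<psi> \<otimes>\<^bsub>Cox n\<^esub> eta y \<omega>"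
  by (simp add: voltage_assignment_def)

lemma va_one: assumes V: "voltage_assignment n m FY adjY eta" and PY: "premaniplex m FY adjY"
  and y: "y \<in> FY" shows "eta y \<one>\<^bsub>Cox m\<^esub> = \<one>\<^bsub>Cox n\<^esub>"
proof -
  interpret G: group "Cox n" by (rule Cox_group)
  interpret H: group "Cox m" by (rule Cox_group)
  have a: "eta y \<one>\<^bsub>Cox m\<^esub> \<in> carrier (Cox n)" using va_closed[OF V y] by simp
  have "eta y \<one>\<^bsub>Cox m\<^esub> = eta y \<one>\<^bsub>Cox m\<^esub> \<otimes>\<^bsub>Cox n\<^esub> eta y \<one>\<^bsub>Cox m\<^esub>"
    using va_mult[OF V y H.one_closed H.one_closed] cox_act_one[OF PY y] by simp
  then show ?thesis using G.l_cancel_one'[OF a a] by simp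
qed

lemma prod_word:
  assumes PX: "premaniplex n FX adjX" and Y: "voltage_operator n m FY adjY eta"
    and x: "x \<in> FX" and y: "y \<in> FY"
  shows "w \<in> lists {..<m} \<Longrightarrow> word_act (vprod_adj m adjX eta adjY) w (x, y)
     = (cox_act adjX (eta y (cls m w)) x, word_act adjY w y)"
proof (induction w)
  case Nil
  have PY: "premaniplex m FY adjY" and V: "voltage_assignment n m FY adjY eta"
    using Y by (auto simp: voltage_operator_def)
  show ?case using va_one[OF V PY y] cox_act_one[OF PX x] by (simp add: one_Cox[symmetric])
next
  case (Cons i w)
  have PY: "premaniplex m FY adjY" and V: "voltage_assignment n m FY adjY eta"
    using Y by (auto simp: voltage_operator_def)
  have i: "i < m" and w: "w \<in> lists {..<m}" using Cons by auto
  have cw: "cls m w \<in> carrier (Cox m)" using cls_in_carrier[OF w] .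
  have gi: "cox_gen m i \<in> carrier (Cox m)" using gen_carrier[OF i] .
  have yw: "cox_act adjY (cls m w) y = word_act adjY w y" using cox_act_cls[OF PY w y] .
  have ywF: "word_act adjY w y \<in> FY" using word_act_closed[OF PY w y] .
  have cl: "cls m (i # w) = cox_gen m i \<otimes>\<^bsub>Cox m\<^esub> cls m w"
    using mult_cls[of "[i]" m w] i w by (simp add: gen_cls)
  have e: "eta y (cls m (i # w)) = eta (word_act adjY w y) (cox_gen m i) \<otimes>\<^bsub>Cox n\<^esub> eta y (cls m w)"
    using cl va_mult[OF V y cw gi] yw by simp
  have "cox_act adjX (eta y (cls m (i # w))) x
      = cox_act adjX (eta (word_act adjY w y) (cox_gen m i)) (cox_act adjX (eta y (cls m w)) x)"
    using e cox_act_mult[OF PX va_closed[OF V ywF gi] va_closed[OF V y cw] x] by simp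
  then show ?case using Cons.IH[OF w] by (simp add: vprod_adj_def)
qed

lemma prod_cox_act:
  assumes PX: "premaniplex n FX adjX" and Y: "voltage_operator n m FY adjY eta"
    and x: "x \<in> FX" and y: "y \<in> FY" and om: "\<omega> \<in> carrier (Cox m)"
  shows "cox_act (vprod_adj m adjX eta adjY) \<omega> (x, y) = (cox_act adjX (eta y \<omega>) x, cox_act adjY \<omega> y)"
proof -
  have PY: "premaniplex m FY adjY" using Y by (auto simp: voltage_operator_def)
  obtain w where w: "w \<in> lists {..<m}" "\<omega> = cls m w" using om by (rule carrier_CoxE)
  define s where "s = (SOME a. a \<in> cls m w)"
  have ws: "(w, s) \<in> cox_eq m" using some_rep[OF w(1)] s_def by simp
  have s: "s \<in> lists {..<m}" using cox_eq_lists[OF ws] by blast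
  have cs: "cls m s = \<omega>" using w ws cls_eq_iff[OF w(1) s] by simp
  have "cox_act (vprod_adj m adjX eta adjY) \<omega> (x, y) = word_act (vprod_adj m adjX eta adjY) s (x, y)"
    unfolding cox_act_def using w s_def by simp
  also have "\<dots> = (cox_act adjX (eta y \<omega>) x, cox_act adjY \<omega> y)"
    using prod_word[OF PX Y x y s] cs cox_act_cls[OF PY s y] by simp
  finally show ?thesis .
qed

lemma prod_word_cong:
  assumes PX: "premaniplex n FX adjX" and Y: "voltage_operator n m FY adjY eta"
    and x: "x \<in> FX" and y: "y \<in> FY" and uv: "(u, v) \<in> cox_eq m"
  shows "word_act (vprod_adj m adjX eta adjY) u (x, y) = word_act (vprod_adj m adjX eta adjY) v (x, y)"
proof -
  have PY: "premaniplex m FY adjY" using Y by (auto simp: voltage_operator_def)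
  have u: "u \<in> lists {..<m}" and v: "v \<in> lists {..<m}" using cox_eq_lists[OF uv] by auto
  have "cls m u = cls m v" using cls_eq_iff[OF u v] uv by simp
  then show ?thesis using prod_word[OF PX Y x y u] prod_word[OF PX Y x y v] word_act_cong[OF PY uv y] by simp
qed

lemma prod_premaniplex:
  assumes PX: "premaniplex n FX adjX" and Y: "voltage_operator n m FY adjY eta"
  shows "premaniplex m (vprod_flags FX FY) (vprod_adj m adjX eta adjY)"
proof -
  have PY: "premaniplex m FY adjY" and V: "voltage_assignment n m FY adjY eta"
    using Y by (auto simp: voltage_operator_def)
  let ?a = "vprod_adj m adjX eta adjY"
  have cl: "?a i p \<in> FX \<times> FY" if "i < m" "p \<in> FX \<times> FY" for i p
    using that cox_act_closed[OF PX va_closed[OF V _ gen_carrier]] PY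
    by (auto simp: vprod_adj_def premaniplex_def)
  have w1: "?a i (?a i p) = p" if i: "i < m" and p: "p \<in> FX \<times> FY" for i p
  proof -
    obtain x y where xy: "p = (x, y)" "x \<in> FX" "y \<in> FY" using p by auto
    have "([] @ [i, i] @ [], [] @ []) \<in> cox_eq m" using i by (intro cox_eq.cox_inv) auto
    then show ?thesis using prod_word_cong[OF PX Y xy(2,3), of "[i, i]" "[]"] xy by simp
  qed
  have w2: "?a i (?a j (?a i (?a j p))) = p" if i: "i < m" "j < m" "i + 2 \<le> j \<or> j + 2 \<le> i"
     and p: "p \<in> FX \<times> FY" for i j p
  proof -
    obtain x y where xy: "p = (x, y)" "x \<in> FX" "y \<in> FY" using p by auto
    have "([] @ [i, j, i, j] @ [], [] @ []) \<in> cox_eq m" using i by (intro cox_eq.cox_comm) auto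
    then show ?thesis using prod_word_cong[OF PX Y xy(2,3), of "[i, j, i, j]" "[]"] xy by simp
  qed
  show ?thesis unfolding premaniplex_def vprod_flags_def using cl w1 w2 by blast
qed

lemma connected_from_base:
  assumes P: "premaniplex m F adj" and b: "b \<in> F"
    and all: "\<And>p. p \<in> F \<Longrightarrow> \<exists>A\<in>carrier (Cox m). p = cox_act adj A b"
  shows "connected_pm m F adj"
  unfolding connected_pm_def
proof (intro ballI)
  interpret H: group "Cox m" by (rule Cox_group)
  fix p q assume p: "p \<in> F" and q: "q \<in> F"
  obtain A where A: "A \<in> carrier (Cox m)" "p = cox_act adj A b" using all[OF p] by blast
  obtain B where B: "B \<in> carrier (Cox m)" "q = cox_act adj B b" using all[OF q] by blast
  have C: "B \<otimes>\<^bsub>Cox m\<^esub> inv\<^bsub>Cox m\<^esub> A \<in> carrier (Cox m)" using A B by simp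
  obtain w where w: "w \<in> lists {..<m}" "B \<otimes>\<^bsub>Cox m\<^esub> inv\<^bsub>Cox m\<^esub> A = cls m w"
    using C by (rule carrier_CoxE)
  have "cox_act adj (B \<otimes>\<^bsub>Cox m\<^esub> inv\<^bsub>Cox m\<^esub> A) p = cox_act adj ((B \<otimes>\<^bsub>Cox m\<^esub> inv\<^bsub>Cox m\<^esub> A) \<otimes>\<^bsub>Cox m\<^esub> A) b"
    using A cox_act_mult[OF P C A(1) b] by simp
  also have "\<dots> = q" using A B by (simp add: H.m_assoc)
  finally have "q = word_act adj w p" using w cox_act_cls[OF P w(1) p] by simp
  then show "\<exists>w\<in>lists {..<m}. q = word_act adj w p" using w(1) by blast
qed

lemma countable_Cox: "countable (carrier (Cox n))"
  unfolding carrier_Cox by (intro countable_image countable_lists) auto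

definition uenc :: "nat \<Rightarrow> nat list set \<Rightarrow> nat" where
  "uenc n = to_nat_on (carrier (Cox n))"
definition udec :: "nat \<Rightarrow> nat \<Rightarrow> nat list set" where
  "udec n = from_nat_into (carrier (Cox n))"
definition uF :: "nat \<Rightarrow> nat set" where
  "uF n = uenc n ` carrier (Cox n)"
definition uadj :: "nat \<Rightarrow> nat \<Rightarrow> nat \<Rightarrow> nat" where
  "uadj n i k = uenc n (cox_gen n i \<otimes>\<^bsub>Cox n\<^esub> udec n k)"

lemma udec_uenc[simp]: "A \<in> carrier (Cox n) \<Longrightarrow> udec n (uenc n A) = A"
  by (simp add: udec_def uenc_def countable_Cox)

lemma uenc_inj: "A \<in> carrier (Cox n) \<Longrightarrow> B \<in> carrier (Cox n) \<Longrightarrow> uenc n A = uenc n B \<longleftrightarrow> A = B"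
  by (metis udec_uenc)

lemma u_word: "w \<in> lists {..<n} \<Longrightarrow> A \<in> carrier (Cox n)
  \<Longrightarrow> word_act (uadj n) w (uenc n A) = uenc n (cls n w \<otimes>\<^bsub>Cox n\<^esub> A)"
proof (induction w)
  case Nil
  interpret G: group "Cox n" by (rule Cox_group)
  show ?case using Nil by (simp add: one_Cox[symmetric])
next
  case (Cons i w)
  interpret G: group "Cox n" by (rule Cox_group)
  have i: "i < n" and w: "w \<in> lists {..<n}" using Cons by auto
  have cw: "cls n w \<in> carrier (Cox n)" using cls_in_carrier[OF w] .
  have gi: "cox_gen n i \<in> carrier (Cox n)" using gen_carrier[OF i] .
  have cl: "cls n (i # w) = cox_gen n i \<otimes>\<^bsub>Cox n\<^esub> cls n w"
    using mult_cls[of "[i]" n w] i w by (simp add: gen_cls)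
  show ?case using Cons.IH[OF w Cons.prems(2)] cw gi Cons.prems(2) cl
    by (simp add: uadj_def G.m_assoc)
qed

lemma u_premaniplex: "premaniplex n (uF n) (uadj n)"
proof -
  interpret G: group "Cox n" by (rule Cox_group)
  have cong: "word_act (uadj n) u k = word_act (uadj n) v k" if uv: "(u, v) \<in> cox_eq n" and k: "k \<in> uF n" for u v k
  proof -
    obtain A where A: "A \<in> carrier (Cox n)" "k = uenc n A" using k by (auto simp: uF_def)
    have u: "u \<in> lists {..<n}" and v: "v \<in> lists {..<n}" using cox_eq_lists[OF uv] by auto
    have "cls n u = cls n v" using cls_eq_iff[OF u v] uv by simp
    then show ?thesis using u_word[OF u A(1)] u_word[OF v A(1)] A by simp
  qed
  have cl: "uadj n i k \<in> uF n" if "i < n" "k \<in> uF n" for i k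
    using that gen_carrier by (auto simp: uF_def uadj_def)
  have w1: "uadj n i (uadj n i k) = k" if i: "i < n" and k: "k \<in> uF n" for i k
  proof -
    have "([] @ [i, i] @ [], [] @ []) \<in> cox_eq n" using i by (intro cox_eq.cox_inv) auto
    then show ?thesis using cong[of "[i, i]" "[]" k] k by simp
  qed
  have w2: "uadj n i (uadj n j (uadj n i (uadj n j k))) = k" if i: "i < n" "j < n" "i + 2 \<le> j \<or> j + 2 \<le> i"
     and k: "k \<in> uF n" for i j k
  proof -
    have "([] @ [i, j, i, j] @ [], [] @ []) \<in> cox_eq n" using i by (intro cox_eq.cox_comm) auto
    then show ?thesis using cong[of "[i, j, i, j]" "[]" k] k by simp
  qed
  show ?thesis unfolding premaniplex_def using cl w1 w2 by blast
qed

lemma u_cox_act: "A \<in> carrier (Cox n) \<Longrightarrow> B \<in> carrier (Cox n)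
  \<Longrightarrow> cox_act (uadj n) A (uenc n B) = uenc n (A \<otimes>\<^bsub>Cox n\<^esub> B)"
proof -
  assume A: "A \<in> carrier (Cox n)" and B: "B \<in> carrier (Cox n)"
  obtain w where w: "w \<in> lists {..<n}" "A = cls n w" using A by (rule carrier_CoxE)
  have "uenc n B \<in> uF n" using B by (simp add: uF_def)
  then show ?thesis using cox_act_cls[OF u_premaniplex w(1)] u_word[OF w(1) B] w by simp
qed

lemma u_connected: "connected_pm n (uF n) (uadj n)"
proof (rule connected_from_base[OF u_premaniplex])
  interpret G: group "Cox n" by (rule Cox_group)
  show "uenc n \<one>\<^bsub>Cox n\<^esub> \<in> uF n" by (simp add: uF_def)
  fix p assume "p \<in> uF n"
  then obtain A where A: "A \<in> carrier (Cox n)" "p = uenc n A" by (auto simp: uF_def)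
  then have "p = cox_act (uadj n) A (uenc n \<one>\<^bsub>Cox n\<^esub>)" using u_cox_act[OF A(1) G.one_closed] by simp
  then show "\<exists>A\<in>carrier (Cox n). p = cox_act (uadj n) A (uenc n \<one>\<^bsub>Cox n\<^esub>)" using A by blast
qed

lemma voltage_surj:
  assumes Y: "voltage_operator n m FY adjY eta" and pc: "preserves_connectivity n m FY adjY eta"
    and y0: "y0 \<in> FY" and g: "g \<in> carrier (Cox n)"
  shows "\<exists>\<psi>\<in>carrier (Cox m). cox_act adjY \<psi> y0 = y0 \<and> eta y0 \<psi> = g"
proof -
  interpret G: group "Cox n" by (rule Cox_group)
  have PY: "premaniplex m FY adjY" and V: "voltage_assignment n m FY adjY eta"
    using Y by (auto simp: voltage_operator_def)
  have conn: "connected_pm m (vprod_flags (uF n) FY) (vprod_adj m (uadj n) eta adjY)"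
    using pc u_premaniplex u_connected unfolding preserves_connectivity_def by blast
  have e1: "uenc n \<one>\<^bsub>Cox n\<^esub> \<in> uF n" and eg: "uenc n g \<in> uF n" using g by (auto simp: uF_def)
  obtain w where w: "w \<in> lists {..<m}"
    "(uenc n g, y0) = word_act (vprod_adj m (uadj n) eta adjY) w (uenc n \<one>\<^bsub>Cox n\<^esub>, y0)"
    using conn e1 eg y0 unfolding connected_pm_def vprod_flags_def by blast
  have cw: "cls m w \<in> carrier (Cox m)" using cls_in_carrier[OF w(1)] .
  have ec: "eta y0 (cls m w) \<in> carrier (Cox n)" using va_closed[OF V y0 cw] .
  have "(uenc n g, y0) = (uenc n (eta y0 (cls m w)), word_act adjY w y0)"
    using w prod_word[OF u_premaniplex Y e1 y0 w(1)] u_cox_act[OF ec G.one_closed] ec by simp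
  then have "g = eta y0 (cls m w)" "cox_act adjY (cls m w) y0 = y0"
    using uenc_inj[OF g ec] cox_act_cls[OF PY w(1) y0] by auto
  then show ?thesis using cw by blast
qed

theorem proposition5p4:
  fixes n m :: nat
    and FX :: "'a set" and adjX :: "nat \<Rightarrow> 'a \<Rightarrow> 'a" and x0 :: 'a
    and FY :: "'b set" and adjY :: "nat \<Rightarrow> 'b \<Rightarrow> 'b" and y0 :: 'b
    and eta :: "'b \<Rightarrow> nat list set \<Rightarrow> nat list set"
  assumes X: "premaniplex n FX adjX" and X_conn: "connected_pm n FX adjX" and x0: "x0 \<in> FX"
    and Y: "voltage_operator n m FY adjY eta" and Y_conv: "trivial_tree_convention n m FY adjY eta"
    and Y_conn: "connected_pm m FY adjY" and y0: "y0 \<in> FY"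
  defines "N \<equiv> stabilizer (Cox n) (cox_act adjX) x0"
    and "L \<equiv> stabilizer (Cox m) (cox_act adjY) y0"
    and "\<zeta> \<equiv> (\<lambda>\<omega>. eta y0 \<omega>)"
  shows "(connected_pm m (vprod_flags FX FY) (vprod_adj m adjX eta adjY) \<and>
          (\<forall>\<gamma>. pm_aut m (vprod_flags FX FY) (vprod_adj m adjX eta adjY) \<gamma>
                 \<longrightarrow> induced_by_X n FX adjX FY \<gamma>)
          \<longrightarrow> normalizer (Cox m) {\<omega> \<in> L. \<zeta> \<omega> \<in> N} \<subseteq> L)
       \<and> (preserves_connectivity n m FY adjY eta \<and> normalizer (Cox m) {\<omega> \<in> L. \<zeta> \<omega> \<in> N} \<subseteq> L
          \<longrightarrow> (\<forall>\<gamma>. pm_aut m (vprod_flags FX FY) (vprod_adj m adjX eta adjY) \<gamma>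
                 \<longrightarrow> induced_by_X n FX adjX FY \<gamma>))"
proof -
  interpret G: group "Cox n" by (rule Cox_group)
  interpret H: group "Cox m" by (rule Cox_group)
  have PY: "premaniplex m FY adjY" and V: "voltage_assignment n m FY adjY eta"
    using Y by (auto simp: voltage_operator_def)
  let ?F = "vprod_flags FX FY"
  let ?a = "vprod_adj m adjX eta adjY"
  have FF: "?F = FX \<times> FY" by (simp add: vprod_flags_def)
  have PP: "premaniplex m ?F ?a" using prod_premaniplex[OF X Y] .
  have b: "(x0, y0) \<in> ?F" using x0 y0 by (simp add: FF)
  have pact: "cox_act ?a \<omega> (x, y) = (cox_act adjX (eta y \<omega>) x, cox_act adjY \<omega> y)"
    if "x \<in> FX" "y \<in> FY" "\<omega> \<in> carrier (Cox m)" for x y \<omega>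
    using prod_cox_act[OF X Y that] .
  have Keq: "{\<omega> \<in> L. \<zeta> \<omega> \<in> N} = stabilizer (Cox m) (cox_act ?a) (x0, y0)"
    unfolding L_def N_def \<zeta>_def stabilizer_def using pact[OF x0 y0] va_closed[OF V y0] by auto
  show ?thesis
  proof (intro conjI impI)
    assume A: "connected_pm m ?F ?a \<and> (\<forall>\<gamma>. pm_aut m ?F ?a \<gamma> \<longrightarrow> induced_by_X n FX adjX FY \<gamma>)"
    show "normalizer (Cox m) {\<omega> \<in> L. \<zeta> \<omega> \<in> N} \<subseteq> L"
    proof
      fix g assume g: "g \<in> normalizer (Cox m) {\<omega> \<in> L. \<zeta> \<omega> \<in> N}"
      then have gN: "g \<in> normalizer (Cox m) (stabilizer (Cox m) (cox_act ?a) (x0, y0))" using Keq by simp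
      have gc: "g \<in> carrier (Cox m)" using gN H.normalizer_iff[OF stab_sub[of m ?a "(x0, y0)"], of g] by blast
      obtain \<gamma> where gam: "pm_aut m ?F ?a \<gamma>" "\<gamma> (x0, y0) = cox_act ?a g (x0, y0)"
        using aut_from_normalizer[OF PP _ b gN] A by blast
      obtain \<alpha> where "\<forall>x\<in>FX. \<forall>y\<in>FY. \<gamma> (x, y) = (\<alpha> x, y)"
        using A gam(1) unfolding induced_by_X_def by blast
      then have "\<gamma> (x0, y0) = (\<alpha> x0, y0)" using x0 y0 by blast
      then have "cox_act adjY g y0 = y0" using gam(2) pact[OF x0 y0 gc] by simp
      then show "g \<in> L" using gc by (simp add: L_def stabilizer_def)
    qed
  next
    assume A: "preserves_connectivity n m FY adjY eta \<and> normalizer (Cox m) {\<omega> \<in> L. \<zeta> \<omega> \<in> N} \<subseteq> L"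
    have surjL: "\<exists>\<psi>\<in>carrier (Cox m). cox_act adjY \<psi> y0 = y0 \<and> eta y0 \<psi> = h"
      if "h \<in> carrier (Cox n)" for h
      using voltage_surj[OF Y _ y0 that] A by blast
    have reach: "\<exists>A\<in>carrier (Cox m). p = cox_act ?a A (x0, y0)" if p: "p \<in> ?F" for p
    proof -
      obtain x y where xy: "p = (x, y)" "x \<in> FX" "y \<in> FY" using p by (auto simp: FF)
      obtain \<psi>0 where p0: "\<psi>0 \<in> carrier (Cox m)" "y = cox_act adjY \<psi>0 y0"
        using connected_cox[OF Y_conn PY y0 xy(3)] by blast
      define e0 where "e0 = eta y0 \<psi>0"
      have e0: "e0 \<in> carrier (Cox n)" using va_closed[OF V y0 p0(1)] e0_def by simp
      have ie0: "inv\<^bsub>Cox n\<^esub> e0 \<in> carrier (Cox n)" using e0 by simp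
      define x' where "x' = cox_act adjX (inv\<^bsub>Cox n\<^esub> e0) x"
      have x': "x' \<in> FX" using cox_act_closed[OF X ie0 xy(2)] x'_def by simp
      obtain h where h: "h \<in> carrier (Cox n)" "x' = cox_act adjX h x0"
        using connected_cox[OF X_conn X x0 x'] by blast
      obtain \<psi> where psi: "\<psi> \<in> carrier (Cox m)" "cox_act adjY \<psi> y0 = y0" "eta y0 \<psi> = h"
        using surjL[OF h(1)] by blast
      have c: "\<psi>0 \<otimes>\<^bsub>Cox m\<^esub> \<psi> \<in> carrier (Cox m)" using p0 psi by simp
      have "cox_act ?a (\<psi>0 \<otimes>\<^bsub>Cox m\<^esub> \<psi>) (x0, y0)
          = (cox_act adjX (eta y0 (\<psi>0 \<otimes>\<^bsub>Cox m\<^esub> \<psi>)) x0, cox_act adjY (\<psi>0 \<otimes>\<^bsub>Cox m\<^esub> \<psi>) y0)"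
        using pact[OF x0 y0 c] .
      also have "eta y0 (\<psi>0 \<otimes>\<^bsub>Cox m\<^esub> \<psi>) = e0 \<otimes>\<^bsub>Cox n\<^esub> h"
        using va_mult[OF V y0 psi(1) p0(1)] psi e0_def by simp
      also have "cox_act adjX (e0 \<otimes>\<^bsub>Cox n\<^esub> h) x0 = cox_act adjX e0 x'"
        using cox_act_mult[OF X e0 h(1) x0] h by simp
      also have "\<dots> = x" using x'_def cox_act_mult[OF X e0 ie0 xy(2)] e0 cox_act_one[OF X xy(2)] by simp
      also have "cox_act adjY (\<psi>0 \<otimes>\<^bsub>Cox m\<^esub> \<psi>) y0 = y"
        using cox_act_mult[OF PY p0(1) psi(1) y0] psi p0 by simp
      finally show ?thesis using xy c by (intro bexI[of _ "\<psi>0 \<otimes>\<^bsub>Cox m\<^esub> \<psi>"]) simp_all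
    qed
    have PC: "connected_pm m ?F ?a" using connected_from_base[OF PP b reach] .
    show "\<forall>\<gamma>. pm_aut m ?F ?a \<gamma> \<longrightarrow> induced_by_X n FX adjX FY \<gamma>"
    proof (intro allI impI)
      fix \<gamma> assume gam: "pm_aut m ?F ?a \<gamma>"
      obtain g where g: "g \<in> normalizer (Cox m) (stabilizer (Cox m) (cox_act ?a) (x0, y0))"
          "\<gamma> (x0, y0) = cox_act ?a g (x0, y0)"
        using normalizer_from_aut[OF PP PC b gam] by blast
      have gc: "g \<in> carrier (Cox m)" using g(1) H.normalizer_iff[OF stab_sub[of m ?a "(x0, y0)"], of g] by blast
      have "g \<in> L" using A g(1) Keq by auto
      then have gy: "cox_act adjY g y0 = y0" by (simp add: L_def stabilizer_def)
      define x1 where "x1 = cox_act adjX (eta y0 g) x0"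
      have x1: "x1 \<in> FX" using cox_act_closed[OF X va_closed[OF V y0 gc] x0] x1_def by simp
      have gb: "\<gamma> (x0, y0) = (x1, y0)" using g(2) pact[OF x0 y0 gc] gy x1_def by simp
      have com: "\<gamma> (cox_act ?a A p) = cox_act ?a A (\<gamma> p)" if "A \<in> carrier (Cox m)" "p \<in> ?F" for A p
        using aut_cox_act[OF gam PP that] .
      have gamF: "\<gamma> p \<in> ?F" if "p \<in> ?F" for p using gam that by (auto simp: pm_aut_def bij_betw_def)
      have sndg: "snd (\<gamma> (x, y)) = y" if xy: "x \<in> FX" "y \<in> FY" for x y
      proof -
        have "(x, y) \<in> ?F" using xy by (simp add: FF)
        then obtain A where A: "A \<in> carrier (Cox m)" "(x, y) = cox_act ?a A (x0, y0)" using reach by blast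
        have "\<gamma> (x, y) = cox_act ?a A (x1, y0)" using A com[OF A(1) b] gb by simp
        then have "snd (\<gamma> (x, y)) = cox_act adjY A y0" using pact[OF x1 y0 A(1)] by simp
        moreover have "y = cox_act adjY A y0" using A(2) pact[OF x0 y0 A(1)] by simp
        ultimately show ?thesis by simp
      qed
      define f where "f p = fst (\<gamma> p)" for p
      have gf: "\<gamma> (x, y) = (f (x, y), y)" and fX: "f (x, y) \<in> FX" if "x \<in> FX" "y \<in> FY" for x y
        using sndg[OF that] gamF[of "(x, y)"] that unfolding f_def FF by (metis prod.collapse, force)
      \<comment> \<open>independence of y via the spanning tree\<close>
      obtain T where T: "spanning_tree m FY adjY T" "\<forall>(y, i)\<in>T. eta y (cox_gen m i) = \<one>\<^bsub>Cox n\<^esub>"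
        using Y_conv unfolding trivial_tree_convention_def by blast
      have Tsub: "y \<in> FY \<and> i < m" if "(y, i) \<in> T" for y i using T(1) that unfolding spanning_tree_def by blast
      have tstep: "f (x, adjY i y) = f (x, y)" if x: "x \<in> FX" and yi: "(y, i) \<in> T" for x y i
      proof -
        have y: "y \<in> FY" and i: "i < m" using Tsub[OF yi] by auto
        have e: "eta y (cox_gen m i) = \<one>\<^bsub>Cox n\<^esub>" using T(2) yi by blast
        have av: "?a i (x', y) = (x', adjY i y)" if "x' \<in> FX" for x'
          using e cox_act_one[OF X that] by (simp add: vprod_adj_def)
        have "(x, y) \<in> ?F" using x y by (simp add: FF)
        then have "\<gamma> (?a i (x, y)) = ?a i (\<gamma> (x, y))" using gam i by (simp add: pm_aut_def)
        then show ?thesis using av[OF x] av[OF fX[OF x y]] gf[OF x y] unfolding f_def by simp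
      qed
      have walk: "f (x, walk_end adjY y ws) = f (x, y)" if "x \<in> FX" "y \<in> FY" "tree_walk T adjY y ws" for x y ws
        using that(2,3)
      proof (induction ws arbitrary: y)
        case Nil then show ?case by (simp add: walk_end_def)
      next
        case (Cons i ws)
        have yi: "(y, i) \<in> T" using Cons by simp
        have y': "adjY i y \<in> FY" using PY Tsub[OF yi] Cons(2) by (simp add: premaniplex_def)
        have "walk_end adjY y (i # ws) = walk_end adjY (adjY i y) ws" by (simp add: walk_end_def)
        then show ?case using Cons.IH[OF y'] Cons(3) tstep[OF that(1) yi] by simp
      qed
      have findep: "f (x, y) = f (x, y0)" if xf: "x \<in> FX" and yf: "y \<in> FY" for x y
      proof -
        obtain ws where "tree_walk T adjY y0 ws" "walk_end adjY y0 ws = y"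
          using T(1) y0 yf unfolding spanning_tree_def by blast
        then show ?thesis using walk[OF xf y0] by metis
      qed
      define \<alpha> where "\<alpha> x = f (x, y0)" for x
      have ind: "\<forall>x\<in>FX. \<forall>y\<in>FY. \<gamma> (x, y) = (\<alpha> x, y)" using gf findep \<alpha>_def by simp
      have inj: "inj_on \<alpha> FX"
      proof
        fix x x' assume xx: "x \<in> FX" "x' \<in> FX" "\<alpha> x = \<alpha> x'"
        then have "\<gamma> (x, y0) = \<gamma> (x', y0)" using ind y0 by simp
        moreover have "inj_on \<gamma> ?F" using gam by (simp add: pm_aut_def bij_betw_def)
        ultimately show "x = x'" using xx y0 by (auto simp: FF dest: inj_onD)
      qed
      have img: "\<alpha> ` FX = FX"
      proof
        show "\<alpha> ` FX \<subseteq> FX" using fX y0 \<alpha>_def by auto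
        show "FX \<subseteq> \<alpha> ` FX"
        proof
          fix x' assume x': "x' \<in> FX"
          have "(x', y0) \<in> \<gamma> ` ?F" using gam x' y0 by (simp add: pm_aut_def bij_betw_def FF)
          then obtain x y where xy: "x \<in> FX" "y \<in> FY" "(x', y0) = \<gamma> (x, y)" by (auto simp: FF)
          then show "x' \<in> \<alpha> ` FX" using ind by auto
        qed
      qed
      have comX: "\<alpha> (adjX j x) = adjX j (\<alpha> x)" if x: "x \<in> FX" and j: "j < n" for x j
      proof -
        obtain \<psi> where psi: "\<psi> \<in> carrier (Cox m)" "cox_act adjY \<psi> y0 = y0" "eta y0 \<psi> = cox_gen n j"
          using surjL[OF gen_carrier[OF j]] by blast
        have ax: "\<alpha> x \<in> FX" using img x by blast
        have "(x, y0) \<in> ?F" using x y0 by (simp add: FF)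
        then have "\<gamma> (cox_act ?a \<psi> (x, y0)) = cox_act ?a \<psi> (\<gamma> (x, y0))" using com[OF psi(1)] by simp
        moreover have "cox_act ?a \<psi> (x, y0) = (adjX j x, y0)"
          using pact[OF x y0 psi(1)] psi cox_act_gen[OF X j x] by simp
        moreover have "cox_act ?a \<psi> (\<gamma> (x, y0)) = (adjX j (\<alpha> x), y0)"
          using ind x y0 pact[OF ax y0 psi(1)] psi cox_act_gen[OF X j ax] by simp
        moreover have "adjX j x \<in> FX" using X x j by (simp add: premaniplex_def)
        ultimately show ?thesis using ind y0 by simp
      qed
      have "pm_aut n FX adjX \<alpha>" unfolding pm_aut_def bij_betw_def using inj img comX by blast
      then show "induced_by_X n FX adjX FY \<gamma>" unfolding induced_by_X_def using ind by blast
    qed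
  qed
qed

end
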